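(* Let $k_1,k_2\in\frac12\mathbb Z$, let $B_1,B_2$ be positive definite symmetric bilinear forms on a real vector space $V$, and let $L$ be a lattice in $V$ which is integral for both $B_1$ and $B_2$. Let $G\le\mathrm{SL}_2(\mathbb Z)$ have finite index, and for $i=1,2$ let $\chi_i$ be a linear character of $\widetilde G\ltimes H((L,B_i),1)$ with finite-index kernel and $\chi_i(([0,0],\xi))=\xi$. Let $f_1,f_2:\mathbb H\times\mathcal V\to\mathbb C$. Then: (1) the map $\chi_1*\chi_2:\widetilde G\ltimes H((L,B_1+B_2),1)\to\mathbb C^\times$, $(\gamma,\varepsilon\sqrt{c\tau+d},[v,w],\xi)\mapsto\xi\,\chi_1(\gamma,\varepsilon\sqrt{c\tau+d},[v,w],1)\,\chi_2(\gamma,\varepsilon\sqrt{c\tau+d},[v,w],1)$ is a linear character; (2) if $f_i\in J_{k_i,(L,B_i)}(G,\chi_i)$ for $i=1,2$, then $f_1f_2\in J_{k_1+k_2,(L,B_1+B_2)}(G,\chi_1*\chi_2)$; moreover if one of $f_1,f_2$ is a Jacobi cusp form, so is $f_1f_2$.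
   Context: $e(x)=\exp(2\pi ix)$, $q^n=e(n\tau)$, $\tau\in\mathbb H$, $\mathcal V=V\oplus iV$. For a form $B'$ on $V$ (extended $\mathbb C$-bilinearly) with $Q'(v)=\frac12B'(v,v)$, integral on $L$ ($B'(L,L)\subseteq\mathbb Z$), dual lattice $L'^\sharp=\{v:B'(v,L)\subseteq\mathbb Z\}$: the metaplectic group consists of pairs $(\gamma,\varepsilon\sqrt{c\tau+d})$, $\gamma=\begin{pmatrix}a&b\\c&d\end{pmatrix}$, $\varepsilon=\pm1$, principal branch, product $(\gamma_1,\phi_1)(\gamma_2,\phi_2)=(\gamma_1\gamma_2,\phi_1(\gamma_2\tau)\phi_2(\tau))$; $\widetilde G$ is the preimage of $G$. $H((L,B'),1)$ consists of $([v,w],\xi)$, $v,w\in L$, $\xi=\pm1$, product $([v_1,w_1],\xi_1)([v_2,w_2],\xi_2)=([v_1+v_2,w_1+w_2],\xi_1\xi_2e^{\pi i(B'(v_1,w_2)-B'(v_2,w_1))})$; the semidirect product uses the right action $[v,w]\gamma=[av+cw,bv+dw]$ (elements $(\gamma,\varepsilon\sqrt{c\tau+d},[v,w],\xi)$ being products $\gamma\cdot([v,w],\xi)$). Slash: $(f|_{k,B'}g)(\tau,z)=(\varepsilon\sqrt{c\tau+d})^{-2k}\xi\,e(-\frac{cQ'(z+\tau v+w)}{c\tau+d}+\tau Q'(v)+B'(v,z)+\frac12B'(v,w))f(\frac{a\tau+b}{c\tau+d},\frac{z+\tau v+w}{c\tau+d})$. $J_{k,(L,B')}(G,\chi)$ is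 the space of holomorphic $f$ with $f|_{k,B'}g=\chi(g)f$ for $g\in\widetilde G\ltimes H((L,B'),1)$ such that for each $g\in\widetilde{\mathrm{SL}_2(\mathbb Z)}\ltimes H((L,B'),1)$ the (normally convergent) expansion $f|_{k,B'}g=\sum c(n,t)q^ne(B'(t,z))$ satisfies $c(n,t)=0$ unless $n\ge Q'(t)$; $f$ is a Jacobi cusp form if moreover $c(n,t)=0$ unless $n>Q'(t)$. *)

theory Defs
  imports "HOL-Analysis.Analysis" "HOL-Algebra.Coset"
begin

definition e :: "complex \<Rightarrow> complex" where
  "e x = exp (2 * of_real pi * \<i> * x)"

definition upper_half :: "complex set" where
  "upper_half = {\<tau>. Im \<tau> > 0}"

definition cvec :: "real ^ 'n \<Rightarrow> complex ^ 'n" where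
  "cvec v = (\<chi> i. complex_of_real (v $ i))"

definition cform :: "(real ^ 'n::finite \<Rightarrow> real ^ 'n \<Rightarrow> real) \<Rightarrow> complex ^ 'n \<Rightarrow> complex ^ 'n \<Rightarrow> complex" where
  "cform B z w = (\<Sum>i\<in>UNIV. \<Sum>j\<in>UNIV. z $ i * w $ j * complex_of_real (B (axis i 1) (axis j 1)))"

definition cquad :: "(real ^ 'n::finite \<Rightarrow> real ^ 'n \<Rightarrow> real) \<Rightarrow> complex ^ 'n \<Rightarrow> complex" where
  "cquad B z = cform B z z / 2"

definition rquad :: "(real ^ 'n::finite \<Rightarrow> real ^ 'n \<Rightarrow> real) \<Rightarrow> real ^ 'n \<Rightarrow> real" where
  "rquad B v = B v v / 2"

definition pos_def_sym_form :: "(real ^ 'n::finite \<Rightarrow> real ^ 'n \<Rightarrow> real) \<Rightarrow> bool" where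
  "pos_def_sym_form B \<longleftrightarrow> bilinear B \<and> (\<forall>v w. B v w = B w v) \<and> (\<forall>v. v \<noteq> 0 \<longrightarrow> B v v > 0)"

definition is_lattice :: "(real ^ 'n::finite) set \<Rightarrow> bool" where
  "is_lattice L \<longleftrightarrow> (\<exists>A :: real ^ 'n ^ 'n. invertible A \<and>
      L = {A *v (\<chi> i. real_of_int (m i)) | m. True})"

definition integral_on :: "(real ^ 'n::finite \<Rightarrow> real ^ 'n \<Rightarrow> real) \<Rightarrow> (real ^ 'n) set \<Rightarrow> bool" where
  "integral_on B L \<longleftrightarrow> (\<forall>v\<in>L. \<forall>w\<in>L. B v w \<in> \<int>)"

type_synonym sl2 = "int \<times> int \<times> int \<times> int"   \<comment> \<open>(a,b,c,d) = matrix [[a,b],[c,d]]\<close>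

definition SL2Z :: "sl2 set" where
  "SL2Z = {(a,b,c,d). a * d - b * c = 1}"

fun mat_mult :: "sl2 \<Rightarrow> sl2 \<Rightarrow> sl2" where
  "mat_mult (a1,b1,c1,d1) (a2,b2,c2,d2) =
     (a1*a2 + b1*c2, a1*b2 + b1*d2, c1*a2 + d1*c2, c1*b2 + d1*d2)"

definition SL2Z_group :: "sl2 monoid" where
  "SL2Z_group = \<lparr>carrier = SL2Z, mult = mat_mult, one = (1,0,0,1)\<rparr>"

fun moebius :: "sl2 \<Rightarrow> complex \<Rightarrow> complex" where
  "moebius (a,b,c,d) \<tau> = (of_int a * \<tau> + of_int b) / (of_int c * \<tau> + of_int d)"

text \<open>An element (gamma, eps * sqrt(c tau + d)) is stored as (gamma, eps), eps = +1 or -1.\<close>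
type_synonym mp = "sl2 \<times> complex"

fun mp_fun :: "mp \<Rightarrow> complex \<Rightarrow> complex" where
  "mp_fun ((a,b,c,d), \<epsilon>) \<tau> = \<epsilon> * csqrt (of_int c * \<tau> + of_int d)"

definition mp_mult :: "mp \<Rightarrow> mp \<Rightarrow> mp" where
  "mp_mult g1 g2 = (mat_mult (fst g1) (fst g2),
     THE \<epsilon>. \<epsilon> \<in> {1, -1} \<and> (\<forall>\<tau>\<in>upper_half.
        mp_fun g1 (moebius (fst g2) \<tau>) * mp_fun g2 \<tau> = mp_fun (mat_mult (fst g1) (fst g2), \<epsilon>) \<tau>))"

type_synonym 'n heis = "((real ^ 'n) \<times> (real ^ 'n)) \<times> complex"

definition heis_mult :: "(real ^ 'n::finite \<Rightarrow> real ^ 'n \<Rightarrow> real) \<Rightarrow> 'n heis \<Rightarrow> 'n heis \<Rightarrow> 'n heis" where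
  "heis_mult B h1 h2 = (case h1 of ((v1,w1),\<xi>1) \<Rightarrow> case h2 of ((v2,w2),\<xi>2) \<Rightarrow>
     ((v1 + v2, w1 + w2),
      \<xi>1 * \<xi>2 * exp (of_real pi * \<i> * complex_of_real (B v1 w2 - B v2 w1))))"

fun heis_act :: "('n::finite) heis \<Rightarrow> sl2 \<Rightarrow> 'n heis" where
  "heis_act ((v,w),\<xi>) (a,b,c,d) =
     ((of_int a *\<^sub>R v + of_int c *\<^sub>R w, of_int b *\<^sub>R v + of_int d *\<^sub>R w), \<xi>)"

type_synonym 'n jac = "mp \<times> 'n heis"

definition jac_mult :: "(real ^ 'n::finite \<Rightarrow> real ^ 'n \<Rightarrow> real) \<Rightarrow> 'n jac \<Rightarrow> 'n jac \<Rightarrow> 'n jac" where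
  "jac_mult B g1 g2 =
     (mp_mult (fst g1) (fst g2), heis_mult B (heis_act (snd g1) (fst (fst g2))) (snd g2))"

text \<open>The group tilde-G semidirect H((L,B),1), for G a set of matrices in SL2(Z).\<close>
definition jacobi_group :: "sl2 set \<Rightarrow> (real ^ 'n::finite) set \<Rightarrow> (real ^ 'n \<Rightarrow> real ^ 'n \<Rightarrow> real) \<Rightarrow> 'n jac monoid" where
  "jacobi_group G L B = \<lparr>carrier = {((\<gamma>,\<epsilon>),((v,w),\<xi>)). \<gamma> \<in> G \<and> \<epsilon> \<in> {1,-1} \<and> v \<in> L \<and> w \<in> L \<and> \<xi> \<in> {1,-1}},
     mult = jac_mult B, one = (((1,0,0,1),1),((0,0),1))\<rparr>"

definition cstar :: "complex monoid" where
  "cstar = \<lparr>carrier = - {0}, mult = (*), one = 1\<rparr>"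

definition linear_character :: "('a, 'm) monoid_scheme \<Rightarrow> ('a \<Rightarrow> complex) \<Rightarrow> bool" where
  "linear_character Gr ch \<longleftrightarrow> ch \<in> hom Gr cstar"

definition char_prod :: "(('n::finite) jac \<Rightarrow> complex) \<Rightarrow> ('n jac \<Rightarrow> complex) \<Rightarrow> 'n jac \<Rightarrow> complex" where
  "char_prod ch1 ch2 g = (case g of (m,((v,w),\<xi>)) \<Rightarrow> \<xi> * ch1 (m,((v,w),1)) * ch2 (m,((v,w),1)))"

text \<open>k is a half-integer, so -2k is the integer -floor(2k).\<close>
definition slash :: "real \<Rightarrow> (real ^ 'n::finite \<Rightarrow> real ^ 'n \<Rightarrow> real) \<Rightarrow>
    (complex \<Rightarrow> complex ^ 'n \<Rightarrow> complex) \<Rightarrow> 'n jac \<Rightarrow> complex \<Rightarrow> complex ^ 'n \<Rightarrow> complex" where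
  "slash k B f g \<tau> z = (case g of (((a,b,c,d),\<epsilon>),((v,w),\<xi>)) \<Rightarrow>
     let u = z + \<tau> *s cvec v + cvec w; j = of_int c * \<tau> + of_int d in
     (\<epsilon> * csqrt j) powi (- \<lfloor>2 * k\<rfloor>) * \<xi> *
     e (- (of_int c * cquad B u) / j + \<tau> * of_real (rquad B v) + cform B (cvec v) z
        + of_real (B v w) / 2) *
     f (moebius (a,b,c,d) \<tau>) ((1 / j) *s u))"

text \<open>Holomorphy on H x C^n: complex (Frechet) differentiability in all variables.\<close>
definition holo_jac :: "(complex \<Rightarrow> complex ^ 'n::finite \<Rightarrow> complex) \<Rightarrow> bool" where
  "holo_jac f \<longleftrightarrow> (\<forall>\<tau>\<in>upper_half. \<forall>z. \<exists>D.
     ((\<lambda>p. f (fst p) (snd p)) has_derivative D) (at (\<tau>, z)) \<and>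
     (\<forall>c p. D (c * fst p, c *s snd p) = c * D p))"

text \<open>Existence of an (absolutely convergent) Fourier expansion
  F(tau,z) = sum c(n,t) q^n e(B(t,z)) with c(n,t) = 0 unless n >= Q(t)
  (resp. n > Q(t) if strict).\<close>
definition fourier_cond :: "bool \<Rightarrow> (real ^ 'n::finite \<Rightarrow> real ^ 'n \<Rightarrow> real) \<Rightarrow>
    (complex \<Rightarrow> complex ^ 'n \<Rightarrow> complex) \<Rightarrow> bool" where
  "fourier_cond strict B F \<longleftrightarrow> (\<exists>c :: real \<Rightarrow> real ^ 'n \<Rightarrow> complex.
     (\<forall>n t. c n t \<noteq> 0 \<longrightarrow> (if strict then n > rquad B t else n \<ge> rquad B t)) \<and>
     (\<forall>\<tau>\<in>upper_half. \<forall>z.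
        ((\<lambda>(n,t). c n t * e (of_real n * \<tau>) * e (cform B (cvec t) z)) has_sum F \<tau> z) UNIV))"

definition jacobi_form :: "real \<Rightarrow> (real ^ 'n) set \<Rightarrow> (real ^ 'n::finite \<Rightarrow> real ^ 'n \<Rightarrow> real) \<Rightarrow>
    sl2 set \<Rightarrow> ('n jac \<Rightarrow> complex) \<Rightarrow> (complex \<Rightarrow> complex ^ 'n \<Rightarrow> complex) \<Rightarrow> bool" where
  "jacobi_form k L B G ch f \<longleftrightarrow> holo_jac f \<and>
     (\<forall>g\<in>carrier (jacobi_group G L B). \<forall>\<tau>\<in>upper_half. \<forall>z.
        slash k B f g \<tau> z = ch g * f \<tau> z) \<and>
     (\<forall>g\<in>carrier (jacobi_group SL2Z L B). fourier_cond False B (slash k B f g))"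

definition jacobi_cusp_form :: "real \<Rightarrow> (real ^ 'n) set \<Rightarrow> (real ^ 'n::finite \<Rightarrow> real ^ 'n \<Rightarrow> real) \<Rightarrow>
    sl2 set \<Rightarrow> ('n jac \<Rightarrow> complex) \<Rightarrow> (complex \<Rightarrow> complex ^ 'n \<Rightarrow> complex) \<Rightarrow> bool" where
  "jacobi_cusp_form k L B G ch f \<longleftrightarrow> jacobi_form k L B G ch f \<and>
     (\<forall>g\<in>carrier (jacobi_group SL2Z L B). fourier_cond True B (slash k B f g))"

end

theory Submission
  imports Defs
begin


lemma has_sum_product_complex:
  fixes a :: "'a \<Rightarrow> complex" and b :: "'b \<Rightarrow> complex"
  assumes ha: "(a has_sum A) UNIV" and hb: "(b has_sum B) UNIV"
  shows "((\<lambda>(x,y). a x * b y) has_sum (A * B)) UNIV"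
proof -
  have SU: "Sigma (UNIV::'a set) (\<lambda>_. UNIV::'b set) = UNIV" by auto
  have sa: "(\<lambda>x. norm (a x)) summable_on UNIV" using ha summable_on_iff_abs_summable_on_complex summable_on_def by blast
  have sb: "(\<lambda>x. norm (b x)) summable_on UNIV" using hb summable_on_iff_abs_summable_on_complex summable_on_def by blast
  have "(\<lambda>z. norm ((\<lambda>(x,y). a x * b y) z)) summable_on Sigma UNIV (\<lambda>_. UNIV)"
  proof (subst Infinite_Sum.abs_summable_on_Sigma_iff, intro conjI ballI)
    fix x show "(\<lambda>y. norm ((\<lambda>(x,y). a x * b y) (x, y))) summable_on UNIV"
      using summable_on_cmult_right[OF sb, of "norm (a x)"] by (simp add: norm_mult)
  next
    have "(\<lambda>x. norm (a x) * infsum (\<lambda>y. norm (b y)) UNIV) summable_on UNIV"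
      using summable_on_cmult_left[OF sa] by simp
    then show "(\<lambda>x. norm (\<Sum>\<^sub>\<infinity>y\<in>UNIV. norm ((\<lambda>(x,y). a x * b y) (x, y)))) summable_on UNIV"
      by (simp add: norm_mult infsum_cmult_right' infsum_nonneg)
  qed
  then have s: "(\<lambda>(x,y). a x * b y) summable_on Sigma UNIV (\<lambda>_. UNIV)"
    using summable_on_iff_abs_summable_on_complex by blast
  have "infsum (\<lambda>x. infsum (\<lambda>y. a x * b y) UNIV) UNIV = infsum (\<lambda>(x,y). a x * b y) (Sigma UNIV (\<lambda>_. UNIV))"
    by (rule infsum_Sigma'_banach) (use s in simp)
  moreover have "infsum (\<lambda>x. infsum (\<lambda>y. a x * b y) UNIV) UNIV = A * B"
    using ha hb by (simp add: infsum_cmult_right' infsum_cmult_left' infsumI)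
  ultimately show ?thesis using s unfolding SU
    by (metis has_sum_infsum)
qed

lemma group_has_sum:
  fixes h :: "'a \<Rightarrow> complex" and \<phi> :: "'a \<Rightarrow> 'b" and w :: "'b \<Rightarrow> complex"
  assumes hs: "((\<lambda>p. h p * w (\<phi> p)) has_sum S) UNIV"
  shows "((\<lambda>q. infsum h {p. \<phi> p = q} * w q) has_sum S) UNIV"
proof -
  let ?j = "\<lambda>p. (\<phi> p, p)"
  have img: "?j ` UNIV = Sigma UNIV (\<lambda>q. {p. \<phi> p = q})" by auto
  have inj: "inj_on ?j UNIV" by (auto intro: inj_onI)
  have "((\<lambda>(q,p). h p * w q) \<circ> ?j) summable_on UNIV"
    using hs unfolding o_def summable_on_def by auto
  then have s: "(\<lambda>(q,p). h p * w q) summable_on Sigma UNIV (\<lambda>q. {p. \<phi> p = q})"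
    unfolding img[symmetric] summable_on_reindex[OF inj] .
  have eq1: "infsum (\<lambda>q. infsum (\<lambda>p. h p * w q) {p. \<phi> p = q}) UNIV
      = infsum (\<lambda>(q,p). h p * w q) (Sigma UNIV (\<lambda>q. {p. \<phi> p = q}))"
    by (rule infsum_Sigma'_banach) (use s in simp)
  have su: "(\<lambda>q. infsum (\<lambda>p. h p * w q) {p. \<phi> p = q}) summable_on UNIV"
    by (rule summable_on_Sigma_banach) (use s in simp)
  have "infsum (\<lambda>(q,p). h p * w q) (Sigma UNIV (\<lambda>q. {p. \<phi> p = q})) = infsum ((\<lambda>(q,p). h p * w q) \<circ> ?j) UNIV"
    unfolding img[symmetric] by (rule infsum_reindex[OF inj])
  also have "\<dots> = infsum (\<lambda>p. h p * w (\<phi> p)) UNIV" by (simp add: o_def)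
  also have "\<dots> = S" using hs by (rule infsumI)
  finally have S0: "infsum (\<lambda>(q,p). h p * w q) (Sigma UNIV (\<lambda>q. {p. \<phi> p = q})) = S" .
  have S: "infsum (\<lambda>q. infsum (\<lambda>p. h p * w q) {p. \<phi> p = q}) UNIV = S" using eq1 S0 by (rule trans)
  have cm: "\<And>q. infsum (\<lambda>p. h p * w q) {p. \<phi> p = q} = infsum h {p. \<phi> p = q} * w q"
    by (rule infsum_cmult_left')
  have "((\<lambda>q. infsum (\<lambda>p. h p * w q) {p. \<phi> p = q}) has_sum S) UNIV"
    using has_sum_infsum[OF su] unfolding S .
  then show ?thesis unfolding cm .
qed



lemma e_add: "e (x + y) = e x * e y"
  unfolding e_def by (simp add: distrib_left exp_add)

lemma bil_rexp:
  fixes B :: "real ^ 'n::finite \<Rightarrow> real ^ 'n \<Rightarrow> real"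
  assumes "bilinear B"
  shows "B x y = (\<Sum>j\<in>UNIV. y$j * B x (axis j 1))"
proof -
  have lin: "linear (\<lambda>y. B x y)" using assms by (simp add: bilinear_def)
  have "B x y = B x (\<Sum>j\<in>UNIV. y$j *\<^sub>R axis j 1)"
    using basis_expansion[of y] by (simp add: scalar_mult_eq_scaleR)
  also have "\<dots> = (\<Sum>j\<in>UNIV. y$j * B x (axis j 1))"
    by (simp add: linear_sum[OF lin] linear_scale[OF lin])
  finally show ?thesis .
qed

lemma bil_lexp:
  fixes B :: "real ^ 'n::finite \<Rightarrow> real ^ 'n \<Rightarrow> real"
  assumes "bilinear B"
  shows "B x y = (\<Sum>i\<in>UNIV. x$i * B (axis i 1) y)"
proof -
  have lin: "linear (\<lambda>x. B x y)" using assms by (simp add: bilinear_def)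
  have "B x y = B (\<Sum>i\<in>UNIV. x$i *\<^sub>R axis i 1) y"
    using basis_expansion[of x] by (simp add: scalar_mult_eq_scaleR)
  also have "\<dots> = (\<Sum>i\<in>UNIV. x$i * B (axis i 1) y)"
    by (simp add: linear_sum[OF lin] linear_scale[OF lin])
  finally show ?thesis .
qed

lemma cform_cvec:
  assumes "bilinear B"
  shows "cform B (cvec t) z = (\<Sum>j\<in>UNIV. z$j * complex_of_real (B t (axis j 1)))"
proof -
  have "cform B (cvec t) z = (\<Sum>i\<in>UNIV. \<Sum>j\<in>UNIV. complex_of_real (t$i) * z$j * complex_of_real (B (axis i 1) (axis j 1)))"
    unfolding cform_def cvec_def by simp
  also have "\<dots> = (\<Sum>j\<in>UNIV. \<Sum>i\<in>UNIV. complex_of_real (t$i) * z$j * complex_of_real (B (axis i 1) (axis j 1)))"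
    by (rule sum.swap)
  also have "\<dots> = (\<Sum>j\<in>UNIV. z$j * complex_of_real (\<Sum>i\<in>UNIV. t$i * B (axis i 1) (axis j 1)))"
    by (simp add: sum_distrib_left mult_ac)
  also have "\<dots> = (\<Sum>j\<in>UNIV. z$j * complex_of_real (B t (axis j 1)))"
    using bil_lexp[OF assms, of t] by simp
  finally show ?thesis .
qed

lemma cform_add: "cform (\<lambda>v w. B1 v w + B2 v w) z w = cform B1 z w + cform B2 z w"
  unfolding cform_def by (simp add: distrib_left sum.distrib)

lemma cquad_add: "cquad (\<lambda>v w. B1 v w + B2 v w) z = cquad B1 z + cquad B2 z"
  unfolding cquad_def cform_add by (simp add: add_divide_distrib)

lemma rquad_add: "rquad (\<lambda>v w. B1 v w + B2 v w) z = rquad B1 z + rquad B2 z"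
  unfolding rquad_def by (simp add: add_divide_distrib)

lemma pds_bil: "pos_def_sym_form B \<Longrightarrow> bilinear B"
  by (simp add: pos_def_sym_form_def)

lemma pds_nonneg: "pos_def_sym_form B \<Longrightarrow> B v v \<ge> 0"
  unfolding pos_def_sym_form_def
  by (metis bilinear_lzero less_eq_real_def order_refl)

lemma pds_sum: "pos_def_sym_form B1 \<Longrightarrow> pos_def_sym_form B2 \<Longrightarrow> pos_def_sym_form (\<lambda>v w. B1 v w + B2 v w)"
  unfolding pos_def_sym_form_def bilinear_def
  by (auto intro!: linear_compose_add add_pos_pos)

lemma dual_exists:
  fixes B :: "real ^ 'n::finite \<Rightarrow> real ^ 'n \<Rightarrow> real"
  assumes "pos_def_sym_form B"
  shows "\<exists>T. \<forall>j. B T (axis j 1) = y $ j"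
proof -
  have bil: "bilinear B" using assms by (rule pds_bil)
  define \<Phi> where "\<Phi> T = (\<chi> j. B T (axis j 1))" for T
  have lin: "linear \<Phi>"
    unfolding \<Phi>_def by (rule linearI) (simp_all add: vec_eq_iff bilinear_ladd[OF bil] bilinear_lmul[OF bil])
  have z: "T = 0" if "\<Phi> T = 0" for T
  proof (rule ccontr)
    assume "T \<noteq> 0"
    then have "B T T > 0" using assms by (simp add: pos_def_sym_form_def)
    moreover have "B T T = (\<Sum>j\<in>UNIV. T$j * B T (axis j 1))" by (rule bil_rexp[OF bil])
    moreover have "\<And>j. B T (axis j 1) = 0" using that by (simp add: \<Phi>_def vec_eq_iff)
    ultimately show False by simp
  qed
  have "inj \<Phi>"
  proof (rule injI)
    fix x y assume "\<Phi> x = \<Phi> y"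
    then have "\<Phi> (x - y) = 0" by (simp add: linear_diff[OF lin])
    then show "x = y" using z by (metis eq_iff_diff_eq_0)
  qed
  then have "surj \<Phi>" using lin linear_injective_imp_surjective by blast
  then obtain T where "\<Phi> T = y" by (metis surjD)
  then show ?thesis by (auto simp: \<Phi>_def vec_eq_iff)
qed



lemma carrier_jg: "carrier (jacobi_group G L B) =
   {((\<gamma>,\<epsilon>),((v,w),\<xi>)). \<gamma> \<in> G \<and> \<epsilon> \<in> {1,-1} \<and> v \<in> L \<and> w \<in> L \<and> \<xi> \<in> {1,-1}}"
  by (simp add: jacobi_group_def)

lemma mult_jg: "mult (jacobi_group G L B) = jac_mult B"
  by (simp add: jacobi_group_def)

lemma j_nonzero:
  assumes "(a,b,c,d) \<in> SL2Z" "\<tau> \<in> upper_half"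
  shows "of_int c * \<tau> + of_int d \<noteq> (0::complex)"
proof
  assume h: "of_int c * \<tau> + of_int d = 0"
  then have "Im (of_int c * \<tau> + of_int d) = 0" by simp
  then have "of_int c * Im \<tau> = 0" by simp
  moreover have "Im \<tau> > 0" using assms(2) by (simp add: upper_half_def)
  ultimately have c: "c = 0" by simp
  with h have "d = 0" by simp
  with c assms(1) show False by (simp add: SL2Z_def)
qed

lemma i_upper: "\<i> \<in> upper_half" by (simp add: upper_half_def)

lemma mp_mult_one:
  assumes "\<gamma> \<in> SL2Z" "\<epsilon> \<in> {1,-1}"
  shows "mp_mult (\<gamma>,\<epsilon>) ((1,0,0,1),1) = (\<gamma>,\<epsilon>)"
proof -
  obtain a b c d where g: "\<gamma> = (a,b,c,d)" by (metis prod.collapse)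
  have nz: "csqrt (of_int c * \<tau> + of_int d) \<noteq> 0" if "\<tau> \<in> upper_half" for \<tau>
    using j_nonzero[of a b c d \<tau>] assms(1) that g by simp
  have "(THE \<epsilon>'. \<epsilon>' \<in> {1, -1} \<and> (\<forall>\<tau>\<in>upper_half.
        mp_fun ((a,b,c,d),\<epsilon>) (moebius (1,0,0,1) \<tau>) * mp_fun ((1,0,0,1),1) \<tau> = mp_fun (mat_mult (a,b,c,d) (1,0,0,1), \<epsilon>') \<tau>)) = \<epsilon>"
  proof (rule the_equality)
    show "\<epsilon> \<in> {1, -1} \<and> (\<forall>\<tau>\<in>upper_half.
        mp_fun ((a,b,c,d),\<epsilon>) (moebius (1,0,0,1) \<tau>) * mp_fun ((1,0,0,1),1) \<tau> = mp_fun (mat_mult (a,b,c,d) (1,0,0,1), \<epsilon>) \<tau>)"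
      using assms(2) by simp
  next
    fix \<epsilon>' assume "\<epsilon>' \<in> {1, -1} \<and> (\<forall>\<tau>\<in>upper_half.
        mp_fun ((a,b,c,d),\<epsilon>) (moebius (1,0,0,1) \<tau>) * mp_fun ((1,0,0,1),1) \<tau> = mp_fun (mat_mult (a,b,c,d) (1,0,0,1), \<epsilon>') \<tau>)"
    then have "\<epsilon> * csqrt (of_int c * \<i> + of_int d) = \<epsilon>' * csqrt (of_int c * \<i> + of_int d)"
      using i_upper by auto
    then show "\<epsilon>' = \<epsilon>" using nz[OF i_upper] by simp
  qed
  then show ?thesis using g by (simp add: mp_mult_def)
qed

lemma lattice_zero:
  fixes L :: "(real^'n::finite) set"
  assumes "is_lattice L" shows "0 \<in> L"
proof -
  obtain A :: "real^'n^'n" where L: "L = {A *v (\<chi> i. real_of_int (m i)) |m. True}"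
    using assms(1) unfolding is_lattice_def by blast
  have "A *v (\<chi> i. real_of_int ((\<lambda>_. 0) i)) = 0"
    by (simp add: vec_eq_iff matrix_vector_mult_def)
  then show ?thesis unfolding L by (auto intro!: exI[of _ "\<lambda>_. 0"])
qed

lemma lattice_comb:
  assumes "is_lattice L" "v \<in> L" "w \<in> L"
  shows "of_int a *\<^sub>R v + of_int c *\<^sub>R w \<in> L"
proof -
  obtain A :: "real^'a^'a" where L: "L = {A *v (\<chi> i. real_of_int (m i)) |m. True}"
    using assms(1) unfolding is_lattice_def by blast
  obtain m1 where m1: "v = A *v (\<chi> i. real_of_int (m1 i))" using assms(2) L by blast
  obtain m2 where m2: "w = A *v (\<chi> i. real_of_int (m2 i))" using assms(3) L by blast
  have lin: "linear ((*v) A)" by (rule matrix_vector_mul_linear)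
  have "of_int a *\<^sub>R v + of_int c *\<^sub>R w = A *v (of_int a *\<^sub>R (\<chi> i. real_of_int (m1 i)) + of_int c *\<^sub>R (\<chi> i. real_of_int (m2 i)))"
    unfolding m1 m2 by (simp add: linear_add[OF lin] linear_scale[OF lin])
  also have "(of_int a *\<^sub>R (\<chi> i. real_of_int (m1 i)) + of_int c *\<^sub>R (\<chi> i. real_of_int (m2 i))) = (\<chi> i. real_of_int (a * m1 i + c * m2 i))"
    by (simp add: vec_eq_iff)
  finally show ?thesis unfolding L by (auto intro!: exI[of _ "\<lambda>i. a * m1 i + c * m2 i"])
qed

lemma exp_int_pm1:
  assumes "x \<in> \<int>"
  shows "exp (of_real pi * \<i> * complex_of_real x) \<in> {1, -1}"
proof -
  obtain k where k: "x = of_int k" using assms by (auto elim: Ints_cases)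
  have "(exp (of_real pi * \<i> * complex_of_real x))^2 = exp ((2 * complex_of_int k * pi) * \<i>)"
    by (simp add: k power2_eq_square exp_add[symmetric] mult_ac)
  also have "\<dots> = exp (complex_of_real (2 * real_of_int k * pi) * \<i>)" by simp
  also have "\<dots> = 1" by (rule exp_integer_2pi) simp
  finally show ?thesis by (simp add: power2_eq_1_iff)
qed

lemma pm1_sq: "x \<in> {1, -1::complex} \<Longrightarrow> x * x = 1" by auto




lemma quad_ineq:
  fixes B1 B2 :: "real ^ 'n::finite \<Rightarrow> real ^ 'n \<Rightarrow> real"
  assumes pd1: "pos_def_sym_form B1" and pd2: "pos_def_sym_form B2"
    and hT: "\<And>j. B1 T (axis j 1) + B2 T (axis j 1) = B1 t (axis j 1) + B2 t' (axis j 1)"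
  shows "rquad (\<lambda>v w. B1 v w + B2 v w) T \<le> rquad B1 t + rquad B2 t'"
proof -
  have b1: "bilinear B1" and b2: "bilinear B2" using pd1 pd2 by (simp_all add: pds_bil)
  have s1: "B1 x y = B1 y x" for x y using pd1 by (simp add: pos_def_sym_form_def)
  have s2: "B2 x y = B2 y x" for x y using pd2 by (simp add: pos_def_sym_form_def)
  have key: "B1 T T + B2 T T = B1 t T + B2 t' T"
    using hT by (simp add: bil_rexp[OF b1, of _ T] bil_rexp[OF b2, of _ T] sum.distrib[symmetric] distrib_left[symmetric])
  have n1: "B1 (t - T) (t - T) \<ge> 0" by (rule pds_nonneg[OF pd1])
  have n2: "B2 (t' - T) (t' - T) \<ge> 0" by (rule pds_nonneg[OF pd2])
  have e1: "B1 (t - T) (t - T) = B1 t t - 2 * B1 t T + B1 T T"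
    by (simp add: bilinear_lsub[OF b1] bilinear_rsub[OF b1] s1[of T t])
  have e2: "B2 (t' - T) (t' - T) = B2 t' t' - 2 * B2 t' T + B2 T T"
    by (simp add: bilinear_lsub[OF b2] bilinear_rsub[OF b2] s2[of T t'])
  have "B1 T T + B2 T T \<le> B1 t t + B2 t' t'" using n1 n2 e1 e2 key by linarith
  then show ?thesis unfolding rquad_def by simp
qed

lemma fourier_prod:
  fixes B1 B2 :: "real ^ 'n::finite \<Rightarrow> real ^ 'n \<Rightarrow> real"
  assumes pd1: "pos_def_sym_form B1" and pd2: "pos_def_sym_form B2"
    and f1: "fourier_cond s1 B1 F1" and f2: "fourier_cond s2 B2 F2"
    and eq: "\<And>\<tau> z. \<tau> \<in> upper_half \<Longrightarrow> F \<tau> z = \<xi> * F1 \<tau> z * F2 \<tau> z"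
  shows "fourier_cond (s1 \<or> s2) (\<lambda>v w. B1 v w + B2 v w) F"
proof -
  let ?Bs = "\<lambda>v w. B1 v w + B2 v w"
  have b1: "bilinear B1" and b2: "bilinear B2" using pd1 pd2 by (simp_all add: pds_bil)
  have pds: "pos_def_sym_form ?Bs" using pd1 pd2 by (rule pds_sum)
  have bs: "bilinear ?Bs" using pds by (rule pds_bil)
  obtain c1 where c1: "\<forall>n t. c1 n t \<noteq> 0 \<longrightarrow> (if s1 then n > rquad B1 t else n \<ge> rquad B1 t)"
    and c1s: "\<forall>\<tau>\<in>upper_half. \<forall>z. ((\<lambda>(n,t). c1 n t * e (of_real n * \<tau>) * e (cform B1 (cvec t) z)) has_sum F1 \<tau> z) UNIV"
    using f1 unfolding fourier_cond_def by blast
  obtain c2 where c2: "\<forall>n t. c2 n t \<noteq> 0 \<longrightarrow> (if s2 then n > rquad B2 t else n \<ge> rquad B2 t)"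
    and c2s: "\<forall>\<tau>\<in>upper_half. \<forall>z. ((\<lambda>(n,t). c2 n t * e (of_real n * \<tau>) * e (cform B2 (cvec t) z)) has_sum F2 \<tau> z) UNIV"
    using f2 unfolding fourier_cond_def by blast
  define Tm where "Tm t t' = (SOME T. \<forall>j. ?Bs T (axis j 1) = (\<chi> j. B1 t (axis j 1) + B2 t' (axis j 1)) $ j)" for t t'
  have Tm: "?Bs (Tm t t') (axis j 1) = B1 t (axis j 1) + B2 t' (axis j 1)" for t t' j
  proof -
    have "\<forall>j. ?Bs (Tm t t') (axis j 1) = (\<chi> j. B1 t (axis j 1) + B2 t' (axis j 1)) $ j"
      unfolding Tm_def by (rule someI_ex) (rule dual_exists[OF pds])
    then show ?thesis by simp
  qed
  define \<phi> where "\<phi> p = (case p of ((n,t),(n',t')) \<Rightarrow> (n + n', Tm t t'))" for p :: "(real \<times> (real^'n)) \<times> (real \<times> (real^'n))"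
  define h where "h p = (case p of ((n,t),(n',t')) \<Rightarrow> \<xi> * c1 n t * c2 n' t')" for p :: "(real \<times> (real^'n)) \<times> (real \<times> (real^'n))"
  define c where "c N T = infsum h {p. \<phi> p = (N, T)}" for N T
  show ?thesis unfolding fourier_cond_def
  proof (intro exI[of _ c] conjI allI impI ballI)
    fix N T assume "c N T \<noteq> 0"
    then obtain p where p: "\<phi> p = (N,T)" "h p \<noteq> 0"
      unfolding c_def by (metis (mono_tags, lifting) infsum_0 mem_Collect_eq)
    obtain n t n' t' where pe: "p = ((n,t),(n',t'))" by (metis prod.collapse)
    have NT: "N = n + n'" "T = Tm t t'" using p(1) pe by (auto simp: \<phi>_def)
    have "c1 n t \<noteq> 0" "c2 n' t' \<noteq> 0" using p(2) pe by (auto simp: h_def)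
    then have i1: "(if s1 then n > rquad B1 t else n \<ge> rquad B1 t)"
      and i2: "(if s2 then n' > rquad B2 t' else n' \<ge> rquad B2 t')" using c1 c2 by auto
    have "rquad ?Bs T \<le> rquad B1 t + rquad B2 t'"
      unfolding NT by (rule quad_ineq[OF pd1 pd2]) (use Tm in simp)
    then show "if s1 \<or> s2 then N > rquad ?Bs T else N \<ge> rquad ?Bs T"
      using i1 i2 NT by (auto split: if_splits)
  next
    fix \<tau> z assume \<tau>: "\<tau> \<in> upper_half"
    define w where "w q = (case q of (N, T) \<Rightarrow> e (of_real N * \<tau>) * e (cform ?Bs (cvec T) z))" for q
    have prod: "((\<lambda>(x,y). (case x of (n,t) \<Rightarrow> c1 n t * e (of_real n * \<tau>) * e (cform B1 (cvec t) z)) *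
                 (case y of (n,t) \<Rightarrow> c2 n t * e (of_real n * \<tau>) * e (cform B2 (cvec t) z))) has_sum (F1 \<tau> z * F2 \<tau> z)) UNIV"
      by (rule has_sum_product_complex) (use c1s c2s \<tau> in auto)
    have "((\<lambda>p. \<xi> * ((\<lambda>(x,y). (case x of (n,t) \<Rightarrow> c1 n t * e (of_real n * \<tau>) * e (cform B1 (cvec t) z)) *
                 (case y of (n,t) \<Rightarrow> c2 n t * e (of_real n * \<tau>) * e (cform B2 (cvec t) z))) p)) has_sum (\<xi> * (F1 \<tau> z * F2 \<tau> z))) UNIV"
      by (rule has_sum_cmult_right[OF prod])
    moreover have "\<xi> * ((\<lambda>(x,y). (case x of (n,t) \<Rightarrow> c1 n t * e (of_real n * \<tau>) * e (cform B1 (cvec t) z)) *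
                 (case y of (n,t) \<Rightarrow> c2 n t * e (of_real n * \<tau>) * e (cform B2 (cvec t) z))) p) = h p * w (\<phi> p)" for p
    proof -
      obtain n t n' t' where pe: "p = ((n,t),(n',t'))" by (metis prod.collapse)
      have ce: "cform ?Bs (cvec (Tm t t')) z = cform B1 (cvec t) z + cform B2 (cvec t') z"
        by (simp add: cform_cvec[OF bs] cform_cvec[OF b1] cform_cvec[OF b2] Tm del: of_real_add) (simp add: distrib_left sum.distrib)
      have "e (of_real (n + n') * \<tau>) = e (of_real n * \<tau>) * e (of_real n' * \<tau>)"
        by (simp add: distrib_right e_add)
      then show ?thesis
        by (simp add: pe h_def w_def \<phi>_def ce e_add)
    qed
    ultimately have "((\<lambda>p. h p * w (\<phi> p)) has_sum (\<xi> * (F1 \<tau> z * F2 \<tau> z))) UNIV" by simp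
    from group_has_sum[where h=h and w=w and \<phi>=\<phi>, OF this] have "((\<lambda>q. infsum h {p. \<phi> p = q} * w q) has_sum (\<xi> * (F1 \<tau> z * F2 \<tau> z))) UNIV" .
    moreover have "(\<lambda>q. infsum h {p. \<phi> p = q} * w q) = (\<lambda>(N,T). c N T * e (of_real N * \<tau>) * e (cform ?Bs (cvec T) z))"
      by (auto simp: c_def w_def fun_eq_iff)
    ultimately show "((\<lambda>(N,T). c N T * e (of_real N * \<tau>) * e (cform ?Bs (cvec T) z)) has_sum F \<tau> z) UNIV"
      using eq[OF \<tau>] by (simp add: mult.assoc)
  qed
qed



lemma cstar_mult: "mult cstar = (*)" by (simp add: cstar_def)
lemma cstar_carrier: "carrier cstar = - {0}" by (simp add: cstar_def)

lemma char_central: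
  fixes ch :: "'n::finite jac \<Rightarrow> complex"
  assumes hom: "ch \<in> hom (jacobi_group G L B) cstar"
    and bil: "bilinear B" and GS: "G \<subseteq> SL2Z" and one: "(1,0,0,1) \<in> G" and L0: "0 \<in> L"
    and c1: "\<And>\<xi>. \<xi> \<in> {1,-1} \<Longrightarrow> ch (((1,0,0,1),1),((0,0),\<xi>)) = \<xi>"
    and mem: "((\<gamma>,\<epsilon>),((v,w),\<xi>)) \<in> carrier (jacobi_group G L B)"
  shows "ch ((\<gamma>,\<epsilon>),((v,w),\<xi>)) = \<xi> * ch ((\<gamma>,\<epsilon>),((v,w),1))"
proof -
  have m: "\<gamma> \<in> G" "\<epsilon> \<in> {1,-1}" "v \<in> L" "w \<in> L" "\<xi> \<in> {1,-1}" using mem by (auto simp: carrier_jg)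
  have x: "((\<gamma>,\<epsilon>),((v,w),1)) \<in> carrier (jacobi_group G L B)" using m by (simp add: carrier_jg)
  have y: "(((1,0,0,1),1),((0,0),\<xi>)) \<in> carrier (jacobi_group G L B)" using m one L0 by (simp add: carrier_jg)
  have "jac_mult B ((\<gamma>,\<epsilon>),((v,w),1)) (((1,0,0,1),1),((0,0),\<xi>)) = ((\<gamma>,\<epsilon>),((v,w),\<xi>))"
    using m GS by (auto simp: jac_mult_def mp_mult_one heis_mult_def bilinear_lzero[OF bil] bilinear_rzero[OF bil])
  then have "ch ((\<gamma>,\<epsilon>),((v,w),\<xi>)) = ch ((\<gamma>,\<epsilon>),((v,w),1)) * ch (((1,0,0,1),1),((0,0),\<xi>))"
    using hom_mult[OF hom x y] by (simp add: mult_jg cstar_mult)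
  then show ?thesis using c1[OF m(5)] by simp
qed

lemma char_mult_formula:
  fixes ch :: "'n::finite jac \<Rightarrow> complex"
  assumes hom: "ch \<in> hom (jacobi_group G L B) cstar"
    and bil: "bilinear B" and GS: "G \<subseteq> SL2Z" and one: "(1,0,0,1) \<in> G" and lat: "is_lattice L"
    and intB: "integral_on B L"
    and c1: "\<And>\<xi>. \<xi> \<in> {1,-1} \<Longrightarrow> ch (((1,0,0,1),1),((0,0),\<xi>)) = \<xi>"
    and g1: "((\<gamma>1,\<epsilon>1),((v1,w1),\<xi>1)) \<in> carrier (jacobi_group G L B)"
    and g2: "(((a,b,c,d),\<epsilon>2),((v2,w2),\<xi>2)) \<in> carrier (jacobi_group G L B)"
  shows "ch (mp_mult (\<gamma>1,\<epsilon>1) ((a,b,c,d),\<epsilon>2),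
             ((of_int a *\<^sub>R v1 + of_int c *\<^sub>R w1 + v2, of_int b *\<^sub>R v1 + of_int d *\<^sub>R w1 + w2), 1))
       = exp (of_real pi * \<i> * complex_of_real (B (of_int a *\<^sub>R v1 + of_int c *\<^sub>R w1) w2 - B v2 (of_int b *\<^sub>R v1 + of_int d *\<^sub>R w1)))
         * ch ((\<gamma>1,\<epsilon>1),((v1,w1),1)) * ch (((a,b,c,d),\<epsilon>2),((v2,w2),1))"
proof -
  define v1' where "v1' = of_int a *\<^sub>R v1 + of_int c *\<^sub>R w1"
  define w1' where "w1' = of_int b *\<^sub>R v1 + of_int d *\<^sub>R w1"
  define E where "E = exp (of_real pi * \<i> * complex_of_real (B v1' w2 - B v2 w1'))"
  have m1: "\<gamma>1 \<in> G" "\<epsilon>1 \<in> {1,-1}" "v1 \<in> L" "w1 \<in> L" using g1 by (auto simp: carrier_jg)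
  have m2: "(a,b,c,d) \<in> G" "\<epsilon>2 \<in> {1,-1}" "v2 \<in> L" "w2 \<in> L" using g2 by (auto simp: carrier_jg)
  have L0: "0 \<in> L" using lat by (rule lattice_zero)
  have v1L: "v1' \<in> L" unfolding v1'_def by (rule lattice_comb[OF lat m1(3,4)])
  have w1L: "w1' \<in> L" unfolding w1'_def by (rule lattice_comb[OF lat m1(3,4)])
  have "B v1' w2 - B v2 w1' \<in> \<int>" using intB v1L w1L m2 by (auto simp: integral_on_def)
  then have E: "E \<in> {1,-1}" unfolding E_def by (rule exp_int_pm1)
  have x: "((\<gamma>1,\<epsilon>1),((v1,w1),E)) \<in> carrier (jacobi_group G L B)" using m1 E by (simp add: carrier_jg)
  have x1: "((\<gamma>1,\<epsilon>1),((v1,w1),1)) \<in> carrier (jacobi_group G L B)" using m1 by (simp add: carrier_jg)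
  have y: "(((a,b,c,d),\<epsilon>2),((v2,w2),1)) \<in> carrier (jacobi_group G L B)" using m2 by (simp add: carrier_jg)
  have "jac_mult B ((\<gamma>1,\<epsilon>1),((v1,w1),E)) (((a,b,c,d),\<epsilon>2),((v2,w2),1))
      = (mp_mult (\<gamma>1,\<epsilon>1) ((a,b,c,d),\<epsilon>2), ((v1' + v2, w1' + w2), E * E))"
    by (simp add: jac_mult_def heis_mult_def v1'_def w1'_def E_def)
  also have "E * E = 1" using E by (rule pm1_sq)
  finally have "ch (mp_mult (\<gamma>1,\<epsilon>1) ((a,b,c,d),\<epsilon>2), ((v1' + v2, w1' + w2), 1))
      = ch ((\<gamma>1,\<epsilon>1),((v1,w1),E)) * ch (((a,b,c,d),\<epsilon>2),((v2,w2),1))"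
    using hom_mult[OF hom x y] by (simp add: mult_jg cstar_mult)
  also have "ch ((\<gamma>1,\<epsilon>1),((v1,w1),E)) = E * ch ((\<gamma>1,\<epsilon>1),((v1,w1),1))"
    by (rule char_central[OF hom bil GS one L0 c1 x])
  finally show ?thesis unfolding v1'_def w1'_def E_def by (simp add: mult.assoc)
qed

lemma char_prod_hom:
  fixes ch1 ch2 :: "'n::finite jac \<Rightarrow> complex"
  assumes hom1: "ch1 \<in> hom (jacobi_group G L B1) cstar"
    and hom2: "ch2 \<in> hom (jacobi_group G L B2) cstar"
    and bil1: "bilinear B1" and bil2: "bilinear B2" and GS: "G \<subseteq> SL2Z" and one: "(1,0,0,1) \<in> G"
    and lat: "is_lattice L" and int1: "integral_on B1 L" and int2: "integral_on B2 L"
    and c1: "\<And>\<xi>. \<xi> \<in> {1,-1} \<Longrightarrow> ch1 (((1,0,0,1),1),((0,0),\<xi>)) = \<xi>"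
    and c2: "\<And>\<xi>. \<xi> \<in> {1,-1} \<Longrightarrow> ch2 (((1,0,0,1),1),((0,0),\<xi>)) = \<xi>"
  shows "char_prod ch1 ch2 \<in> hom (jacobi_group G L (\<lambda>v w. B1 v w + B2 v w)) cstar"
proof -
  have cb: "carrier (jacobi_group G L B) = carrier (jacobi_group G L B')" for B B' :: "real^'n \<Rightarrow> real^'n \<Rightarrow> real"
    by (simp add: carrier_jg)
  show ?thesis
  proof (rule homI)
    fix x assume x: "x \<in> carrier (jacobi_group G L (\<lambda>v w. B1 v w + B2 v w))"
    then obtain m v w \<xi> where xe: "x = (m,((v,w),\<xi>))" and m: "\<xi> \<in> {1,-1}"
      by (auto simp: carrier_jg)
    have x1: "(m,((v,w),1)) \<in> carrier (jacobi_group G L B1)" using x xe by (auto simp: carrier_jg)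
    have x2: "(m,((v,w),1)) \<in> carrier (jacobi_group G L B2)" using x xe by (auto simp: carrier_jg)
    have "ch1 (m,((v,w),1)) \<noteq> 0" using hom_in_carrier[OF hom1 x1] by (simp add: cstar_carrier)
    moreover have "ch2 (m,((v,w),1)) \<noteq> 0" using hom_in_carrier[OF hom2 x2] by (simp add: cstar_carrier)
    ultimately show "char_prod ch1 ch2 x \<in> carrier cstar" using m xe by (auto simp: char_prod_def cstar_carrier)
  next
    fix x y assume x: "x \<in> carrier (jacobi_group G L (\<lambda>v w. B1 v w + B2 v w))"
      and y: "y \<in> carrier (jacobi_group G L (\<lambda>v w. B1 v w + B2 v w))"
    obtain \<gamma>1 \<epsilon>1 v1 w1 \<xi>1 where xe: "x = ((\<gamma>1,\<epsilon>1),((v1,w1),\<xi>1))" by (metis prod.collapse)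
    obtain a b c d \<epsilon>2 v2 w2 \<xi>2 where ye: "y = (((a,b,c,d),\<epsilon>2),((v2,w2),\<xi>2))" by (metis prod.collapse)
    have gx1: "((\<gamma>1,\<epsilon>1),((v1,w1),\<xi>1)) \<in> carrier (jacobi_group G L B1)" using x xe by (simp add: carrier_jg)
    have gy1: "(((a,b,c,d),\<epsilon>2),((v2,w2),\<xi>2)) \<in> carrier (jacobi_group G L B1)" using y ye by (simp add: carrier_jg)
    have gx2: "((\<gamma>1,\<epsilon>1),((v1,w1),\<xi>1)) \<in> carrier (jacobi_group G L B2)" using x xe by (simp add: carrier_jg)
    have gy2: "(((a,b,c,d),\<epsilon>2),((v2,w2),\<xi>2)) \<in> carrier (jacobi_group G L B2)" using y ye by (simp add: carrier_jg)
    define v1' where "v1' = of_int a *\<^sub>R v1 + of_int c *\<^sub>R w1"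
    define w1' where "w1' = of_int b *\<^sub>R v1 + of_int d *\<^sub>R w1"
    define E1 where "E1 = exp (of_real pi * \<i> * complex_of_real (B1 v1' w2 - B1 v2 w1'))"
    define E2 where "E2 = exp (of_real pi * \<i> * complex_of_real (B2 v1' w2 - B2 v2 w1'))"
    define M where "M = mp_mult (\<gamma>1,\<epsilon>1) ((a,b,c,d),\<epsilon>2)"
    have f1: "ch1 (M, ((v1'+v2, w1'+w2), 1)) = E1 * ch1 ((\<gamma>1,\<epsilon>1),((v1,w1),1)) * ch1 (((a,b,c,d),\<epsilon>2),((v2,w2),1))"
      unfolding M_def v1'_def w1'_def E1_def by (rule char_mult_formula[OF hom1 bil1 GS one lat int1 c1 gx1 gy1])
    have f2: "ch2 (M, ((v1'+v2, w1'+w2), 1)) = E2 * ch2 ((\<gamma>1,\<epsilon>1),((v1,w1),1)) * ch2 (((a,b,c,d),\<epsilon>2),((v2,w2),1))"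
      unfolding M_def v1'_def w1'_def E2_def by (rule char_mult_formula[OF hom2 bil2 GS one lat int2 c2 gx2 gy2])
    have L0: "0 \<in> L" using lat by (rule lattice_zero)
    have m1: "v1 \<in> L" "w1 \<in> L" using gx1 by (auto simp: carrier_jg)
    have m2: "v2 \<in> L" "w2 \<in> L" using gy1 by (auto simp: carrier_jg)
    have v1L: "v1' \<in> L" unfolding v1'_def by (rule lattice_comb[OF lat m1])
    have w1L: "w1' \<in> L" unfolding w1'_def by (rule lattice_comb[OF lat m1])
    have "B1 v1' w2 - B1 v2 w1' \<in> \<int>" using int1 v1L w1L m2 by (auto simp: integral_on_def)
    then have E1: "E1 \<in> {1,-1}" unfolding E1_def by (rule exp_int_pm1)
    have "B2 v1' w2 - B2 v2 w1' \<in> \<int>" using int2 v1L w1L m2 by (auto simp: integral_on_def)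
    then have E2: "E2 \<in> {1,-1}" unfolding E2_def by (rule exp_int_pm1)
    have Es: "exp (of_real pi * \<i> * complex_of_real ((B1 v1' w2 + B2 v1' w2) - (B1 v2 w1' + B2 v2 w1'))) = E1 * E2"
      unfolding E1_def E2_def by (simp add: exp_add[symmetric] algebra_simps)
    have prod: "jac_mult (\<lambda>v w. B1 v w + B2 v w) x y = (M, ((v1'+v2, w1'+w2), \<xi>1 * \<xi>2 * (E1 * E2)))"
      unfolding xe ye Es[symmetric] by (simp add: jac_mult_def heis_mult_def v1'_def w1'_def M_def)
    have "char_prod ch1 ch2 (mult (jacobi_group G L (\<lambda>v w. B1 v w + B2 v w)) x y)
        = \<xi>1 * \<xi>2 * (E1 * E1) * (E2 * E2) * (ch1 ((\<gamma>1,\<epsilon>1),((v1,w1),1)) * ch1 (((a,b,c,d),\<epsilon>2),((v2,w2),1)))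
          * (ch2 ((\<gamma>1,\<epsilon>1),((v1,w1),1)) * ch2 (((a,b,c,d),\<epsilon>2),((v2,w2),1)))"
      unfolding mult_jg prod char_prod_def by (simp add: f1 f2 mult_ac)
    also have "\<dots> = char_prod ch1 ch2 x * char_prod ch1 ch2 y"
      using pm1_sq[OF E1] pm1_sq[OF E2] unfolding xe ye char_prod_def by (simp add: mult_ac)
    finally show "char_prod ch1 ch2 (mult (jacobi_group G L (\<lambda>v w. B1 v w + B2 v w)) x y)
        = mult cstar (char_prod ch1 ch2 x) (char_prod ch1 ch2 y)" by (simp add: cstar_mult)
  qed
qed



lemma slash_prod:
  fixes B1 B2 :: "real ^ 'n::finite \<Rightarrow> real ^ 'n \<Rightarrow> real"
  assumes k1: "2 * k1 \<in> \<int>" and k2: "2 * k2 \<in> \<int>" and g: "(a,b,c,d) \<in> SL2Z"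
    and eps: "\<epsilon> \<in> {1,-1}" and tau: "\<tau> \<in> upper_half"
  shows "slash (k1+k2) (\<lambda>v w. B1 v w + B2 v w) (\<lambda>\<tau> z. f1 \<tau> z * f2 \<tau> z) (((a,b,c,d),\<epsilon>),((v,w),\<xi>)) \<tau> z
    = \<xi> * slash k1 B1 f1 (((a,b,c,d),\<epsilon>),((v,w),1)) \<tau> z * slash k2 B2 f2 (((a,b,c,d),\<epsilon>),((v,w),1)) \<tau> z"
proof -
  define j where "j = of_int c * \<tau> + of_int d"
  define u where "u = z + \<tau> *s cvec v + cvec w"
  define X where "X = \<epsilon> * csqrt j"
  have jnz: "j \<noteq> 0" unfolding j_def by (rule j_nonzero[OF g tau])
  have Xnz: "X \<noteq> 0" using eps jnz by (auto simp: X_def)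
  obtain m1 where m1: "2 * k1 = of_int m1" using k1 by (auto elim: Ints_cases)
  obtain m2 where m2: "2 * k2 = of_int m2" using k2 by (auto elim: Ints_cases)
  have fl: "\<lfloor>2 * (k1 + k2)\<rfloor> = \<lfloor>2 * k1\<rfloor> + \<lfloor>2 * k2\<rfloor>"
  proof -
    have "2 * (k1 + k2) = of_int (m1 + m2)" using m1 m2 by (simp add: distrib_left)
    then show ?thesis using m1 m2 by simp
  qed
  have P: "X powi (- \<lfloor>2 * (k1 + k2)\<rfloor>) = X powi (- \<lfloor>2 * k1\<rfloor>) * X powi (- \<lfloor>2 * k2\<rfloor>)"
    unfolding fl minus_add_distrib by (rule power_int_add) (use Xnz in simp)
  define A1 where "A1 = - (of_int c * cquad B1 u) / j + \<tau> * of_real (rquad B1 v) + cform B1 (cvec v) z + of_real (B1 v w) / 2"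
  define A2 where "A2 = - (of_int c * cquad B2 u) / j + \<tau> * of_real (rquad B2 v) + cform B2 (cvec v) z + of_real (B2 v w) / 2"
  have AS: "- (of_int c * cquad (\<lambda>v w. B1 v w + B2 v w) u) / j + \<tau> * of_real (rquad (\<lambda>v w. B1 v w + B2 v w) v)
       + cform (\<lambda>v w. B1 v w + B2 v w) (cvec v) z + of_real (B1 v w + B2 v w) / 2 = A1 + A2"
    unfolding A1_def A2_def cquad_add rquad_add cform_add by (simp add: algebra_simps add_divide_distrib diff_divide_distrib)
  show ?thesis
    unfolding slash_def Let_def
    apply (simp only: prod.case)
    unfolding j_def[symmetric] u_def[symmetric] X_def[symmetric] AS P
    unfolding A1_def[symmetric] A2_def[symmetric] e_add
    by (simp add: mult_ac)
qed

lemma holo_prod: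
  assumes "holo_jac f1" "holo_jac f2"
  shows "holo_jac (\<lambda>\<tau> z. f1 \<tau> z * f2 \<tau> z)"
  unfolding holo_jac_def
proof (intro ballI allI)
  fix \<tau> z assume t: "\<tau> \<in> upper_half"
  obtain D1 where D1: "((\<lambda>p. f1 (fst p) (snd p)) has_derivative D1) (at (\<tau>, z))" "\<forall>c p. D1 (c * fst p, c *s snd p) = c * D1 p"
    using assms(1) t unfolding holo_jac_def by blast
  obtain D2 where D2: "((\<lambda>p. f2 (fst p) (snd p)) has_derivative D2) (at (\<tau>, z))" "\<forall>c p. D2 (c * fst p, c *s snd p) = c * D2 p"
    using assms(2) t unfolding holo_jac_def by blast
  have "((\<lambda>p. f1 (fst p) (snd p) * f2 (fst p) (snd p)) has_derivative
      (\<lambda>h. f1 (fst (\<tau>,z)) (snd (\<tau>,z)) * D2 h + D1 h * f2 (fst (\<tau>,z)) (snd (\<tau>,z)))) (at (\<tau>, z))"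
    by (rule has_derivative_mult[OF D1(1) D2(1)])
  moreover have "\<forall>c p. (\<lambda>h. f1 \<tau> z * D2 h + D1 h * f2 \<tau> z) (c * fst p, c *s snd p) = c * (\<lambda>h. f1 \<tau> z * D2 h + D1 h * f2 \<tau> z) p"
    using D1(2) D2(2) by (simp add: algebra_simps)
  ultimately show "\<exists>D. ((\<lambda>p. f1 (fst p) (snd p) * f2 (fst p) (snd p)) has_derivative D) (at (\<tau>, z)) \<and>
              (\<forall>c p. D (c * fst p, c *s snd p) = c * D p)" by auto
qed


lemma fourier_part:
  fixes B1 B2 :: "real ^ 'n::finite \<Rightarrow> real ^ 'n \<Rightarrow> real"
  assumes pd1: "pos_def_sym_form B1" and pd2: "pos_def_sym_form B2"
    and k1: "2 * k1 \<in> \<int>" and k2: "2 * k2 \<in> \<int>"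
    and F1: "\<forall>g\<in>carrier (jacobi_group SL2Z L B1). fourier_cond s1 B1 (slash k1 B1 f1 g)"
    and F2: "\<forall>g\<in>carrier (jacobi_group SL2Z L B2). fourier_cond s2 B2 (slash k2 B2 f2 g)"
  shows "\<forall>g\<in>carrier (jacobi_group SL2Z L (\<lambda>v w. B1 v w + B2 v w)).
           fourier_cond (s1 \<or> s2) (\<lambda>v w. B1 v w + B2 v w) (slash (k1 + k2) (\<lambda>v w. B1 v w + B2 v w) (\<lambda>\<tau> z. f1 \<tau> z * f2 \<tau> z) g)"
proof
  fix g assume g: "g \<in> carrier (jacobi_group SL2Z L (\<lambda>v w. B1 v w + B2 v w))"
  obtain a b c d \<epsilon> v w \<xi> where ge: "g = (((a,b,c,d),\<epsilon>),((v,w),\<xi>))" by (metis prod.collapse)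
  have m: "(a,b,c,d) \<in> SL2Z" "\<epsilon> \<in> {1,-1}" using g ge by (auto simp: carrier_jg)
  have g1: "(((a,b,c,d),\<epsilon>),((v,w),1)) \<in> carrier (jacobi_group SL2Z L B1)" using g ge by (auto simp: carrier_jg)
  have g2: "(((a,b,c,d),\<epsilon>),((v,w),1)) \<in> carrier (jacobi_group SL2Z L B2)" using g ge by (auto simp: carrier_jg)
  show "fourier_cond (s1 \<or> s2) (\<lambda>v w. B1 v w + B2 v w) (slash (k1 + k2) (\<lambda>v w. B1 v w + B2 v w) (\<lambda>\<tau> z. f1 \<tau> z * f2 \<tau> z) g)"
    unfolding ge
    by (rule fourier_prod[OF pd1 pd2 F1[rule_format, OF g1] F2[rule_format, OF g2]])
       (rule slash_prod[OF k1 k2 m])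
qed

theorem proposition2p12:
  fixes k1 k2 :: real
    and B1 B2 :: "real ^ 'n::finite \<Rightarrow> real ^ 'n \<Rightarrow> real"
    and L :: "(real ^ 'n) set"
    and G :: "sl2 set"
    and ch1 ch2 :: "'n jac \<Rightarrow> complex"
    and f1 f2 :: "complex \<Rightarrow> complex ^ 'n \<Rightarrow> complex"
  assumes "2 * k1 \<in> \<int>" and "2 * k2 \<in> \<int>"
    and "pos_def_sym_form B1" and "pos_def_sym_form B2"
    and "is_lattice L" and "integral_on B1 L" and "integral_on B2 L"
    and "subgroup G SL2Z_group" and "finite (rcosets\<^bsub>SL2Z_group\<^esub> G)"
    and "linear_character (jacobi_group G L B1) ch1"
    and "finite (rcosets\<^bsub>jacobi_group G L B1\<^esub> (kernel (jacobi_group G L B1) cstar ch1))"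
    and "\<And>\<xi>. \<xi> \<in> {1, -1} \<Longrightarrow> ch1 (((1,0,0,1),1),((0,0),\<xi>)) = \<xi>"
    and "linear_character (jacobi_group G L B2) ch2"
    and "finite (rcosets\<^bsub>jacobi_group G L B2\<^esub> (kernel (jacobi_group G L B2) cstar ch2))"
    and "\<And>\<xi>. \<xi> \<in> {1, -1} \<Longrightarrow> ch2 (((1,0,0,1),1),((0,0),\<xi>)) = \<xi>"
  shows "linear_character (jacobi_group G L (\<lambda>v w. B1 v w + B2 v w)) (char_prod ch1 ch2)
    \<and> ((jacobi_form k1 L B1 G ch1 f1 \<and> jacobi_form k2 L B2 G ch2 f2) \<longrightarrow>
        (jacobi_form (k1 + k2) L (\<lambda>v w. B1 v w + B2 v w) G (char_prod ch1 ch2) (\<lambda>\<tau> z. f1 \<tau> z * f2 \<tau> z)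
         \<and> ((jacobi_cusp_form k1 L B1 G ch1 f1 \<or> jacobi_cusp_form k2 L B2 G ch2 f2) \<longrightarrow>
             jacobi_cusp_form (k1 + k2) L (\<lambda>v w. B1 v w + B2 v w) G (char_prod ch1 ch2) (\<lambda>\<tau> z. f1 \<tau> z * f2 \<tau> z))))"
proof -
  note k1 = assms(1) and k2 = assms(2) and pd1 = assms(3) and pd2 = assms(4) and lat = assms(5)
    and int1 = assms(6) and int2 = assms(7) and sg = assms(8) and lc1 = assms(10) and c1 = assms(12)
    and lc2 = assms(13) and c2 = assms(15)
  have bil1: "bilinear B1" and bil2: "bilinear B2" using pd1 pd2 by (simp_all add: pds_bil)
  have GS: "G \<subseteq> SL2Z" using subgroup.subset[OF sg] by (simp add: SL2Z_group_def)
  have one: "(1,0,0,1) \<in> G" using subgroup.one_closed[OF sg] by (simp add: SL2Z_group_def)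
  have hom1: "ch1 \<in> hom (jacobi_group G L B1) cstar" using lc1 by (simp add: linear_character_def)
  have hom2: "ch2 \<in> hom (jacobi_group G L B2) cstar" using lc2 by (simp add: linear_character_def)
  have part1: "linear_character (jacobi_group G L (\<lambda>v w. B1 v w + B2 v w)) (char_prod ch1 ch2)"
    unfolding linear_character_def
    by (rule char_prod_hom[OF hom1 hom2 bil1 bil2 GS one lat int1 int2 c1 c2])
  have part2: "jacobi_form (k1 + k2) L (\<lambda>v w. B1 v w + B2 v w) G (char_prod ch1 ch2) (\<lambda>\<tau> z. f1 \<tau> z * f2 \<tau> z)"
    if J1: "jacobi_form k1 L B1 G ch1 f1" and J2: "jacobi_form k2 L B2 G ch2 f2"
  proof -
    have h: "holo_jac (\<lambda>\<tau> z. f1 \<tau> z * f2 \<tau> z)"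
      using J1 J2 by (intro holo_prod) (simp_all add: jacobi_form_def)
    have tr: "slash (k1 + k2) (\<lambda>v w. B1 v w + B2 v w) (\<lambda>\<tau> z. f1 \<tau> z * f2 \<tau> z) g \<tau> z
        = char_prod ch1 ch2 g * (f1 \<tau> z * f2 \<tau> z)"
      if g: "g \<in> carrier (jacobi_group G L (\<lambda>v w. B1 v w + B2 v w))" and t: "\<tau> \<in> upper_half" for g \<tau> z
    proof -
      obtain a b c d \<epsilon> v w \<xi> where ge: "g = (((a,b,c,d),\<epsilon>),((v,w),\<xi>))" by (metis prod.collapse)
      have m: "(a,b,c,d) \<in> SL2Z" "\<epsilon> \<in> {1,-1}" using g ge GS by (auto simp: carrier_jg)
      have g1: "(((a,b,c,d),\<epsilon>),((v,w),1)) \<in> carrier (jacobi_group G L B1)" using g ge by (auto simp: carrier_jg)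
      have g2: "(((a,b,c,d),\<epsilon>),((v,w),1)) \<in> carrier (jacobi_group G L B2)" using g ge by (auto simp: carrier_jg)
      have s1: "slash k1 B1 f1 (((a,b,c,d),\<epsilon>),((v,w),1)) \<tau> z = ch1 (((a,b,c,d),\<epsilon>),((v,w),1)) * f1 \<tau> z"
        using J1 g1 t by (simp add: jacobi_form_def)
      have s2: "slash k2 B2 f2 (((a,b,c,d),\<epsilon>),((v,w),1)) \<tau> z = ch2 (((a,b,c,d),\<epsilon>),((v,w),1)) * f2 \<tau> z"
        using J2 g2 t by (simp add: jacobi_form_def)
      show ?thesis unfolding ge slash_prod[OF k1 k2 m t] s1 s2
        by (simp add: char_prod_def mult_ac)
    qed
    have fo: "\<forall>g\<in>carrier (jacobi_group SL2Z L (\<lambda>v w. B1 v w + B2 v w)).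
           fourier_cond (False \<or> False) (\<lambda>v w. B1 v w + B2 v w) (slash (k1 + k2) (\<lambda>v w. B1 v w + B2 v w) (\<lambda>\<tau> z. f1 \<tau> z * f2 \<tau> z) g)"
      by (rule fourier_part[OF pd1 pd2 k1 k2]) (use J1 J2 in \<open>simp_all add: jacobi_form_def\<close>)
    show ?thesis unfolding jacobi_form_def using h tr fo by auto
  qed
  have part3: "jacobi_cusp_form (k1 + k2) L (\<lambda>v w. B1 v w + B2 v w) G (char_prod ch1 ch2) (\<lambda>\<tau> z. f1 \<tau> z * f2 \<tau> z)"
    if J1: "jacobi_form k1 L B1 G ch1 f1" and J2: "jacobi_form k2 L B2 G ch2 f2"
      and C: "jacobi_cusp_form k1 L B1 G ch1 f1 \<or> jacobi_cusp_form k2 L B2 G ch2 f2"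
  proof -
    have fo: "\<forall>g\<in>carrier (jacobi_group SL2Z L (\<lambda>v w. B1 v w + B2 v w)).
           fourier_cond True (\<lambda>v w. B1 v w + B2 v w) (slash (k1 + k2) (\<lambda>v w. B1 v w + B2 v w) (\<lambda>\<tau> z. f1 \<tau> z * f2 \<tau> z) g)"
      using C
    proof
      assume "jacobi_cusp_form k1 L B1 G ch1 f1"
      then have "\<forall>g\<in>carrier (jacobi_group SL2Z L (\<lambda>v w. B1 v w + B2 v w)).
           fourier_cond (True \<or> False) (\<lambda>v w. B1 v w + B2 v w) (slash (k1 + k2) (\<lambda>v w. B1 v w + B2 v w) (\<lambda>\<tau> z. f1 \<tau> z * f2 \<tau> z) g)"
        by (intro fourier_part[OF pd1 pd2 k1 k2]) (use J2 in \<open>simp_all add: jacobi_form_def jacobi_cusp_form_def\<close>)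
      then show ?thesis by simp
    next
      assume "jacobi_cusp_form k2 L B2 G ch2 f2"
      then have "\<forall>g\<in>carrier (jacobi_group SL2Z L (\<lambda>v w. B1 v w + B2 v w)).
           fourier_cond (False \<or> True) (\<lambda>v w. B1 v w + B2 v w) (slash (k1 + k2) (\<lambda>v w. B1 v w + B2 v w) (\<lambda>\<tau> z. f1 \<tau> z * f2 \<tau> z) g)"
        by (intro fourier_part[OF pd1 pd2 k1 k2]) (use J1 in \<open>simp_all add: jacobi_form_def jacobi_cusp_form_def\<close>)
      then show ?thesis by simp
    qed
    show ?thesis unfolding jacobi_cusp_form_def using part2[OF J1 J2] fo by auto
  qed
  show ?thesis using part1 part2 part3 by blast
qed


end
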